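(* Let $k\ge2$ and let $\mathcal C_1$ be the binary code with generator matrix $[I_k\ \tilde G_k]$. Then every erasure pattern with at most $k-1$ erasures allows for parallel easy repair.
   Context: $\tilde G_k$ denotes the $k\times\frac{k(k-1)}{2}$ binary matrix whose columns are all vectors of $\mathbb F_2^k$ of Hamming weight $2$; $\mathcal C_1$ has length $n=\frac{k(k+1)}{2}$ and minimum distance $k$. Let $g_1,\dots,g_n$ be the columns of $[I_k\ \tilde G_k]$; nodes are the coordinates $c_1,\dots,c_n$ of codewords $c=u[I_k\ \tilde G_k]$. An erasure pattern is a set of erased nodes; the others are live. A node $c_i$ is related to distinct nodes $c_{j_1},\dots,c_{j_\gamma}$ (all different from $c_i$) if $g_i=g_{j_1}+\dots+g_{j_\gamma}$. An erased node allows for easy repair if it is related to $\gamma\le 2$ live nodes. An erasure pattern allows for parallel easy repair if each erased node allows for easy repair with respect to the original set of live nodes. *)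

theory Defs
  imports Main "HOL-Library.Z2"
begin

text \<open>Vectors of F_2^k are modelled as functions nat => bit (only coordinates 0..k-1 are used).\<close>

definition unitv :: "nat \<Rightarrow> nat \<Rightarrow> bit" where
  "unitv a = (\<lambda>t. if t = a then 1 else 0)"

definition pairv :: "nat \<Rightarrow> nat \<Rightarrow> nat \<Rightarrow> bit" where
  "pairv a b = (\<lambda>t. if t = a \<or> t = b then 1 else 0)"

definition id_cols :: "nat \<Rightarrow> (nat \<Rightarrow> bit) list" where
  "id_cols k = map unitv [0..<k]"

text \<open>Columns of tilde G_k: all weight-2 vectors of F_2^k, each exactly once (a < b < k).\<close>
definition Gtilde_cols :: "nat \<Rightarrow> (nat \<Rightarrow> bit) list" where
  "Gtilde_cols k = concat (map (\<lambda>b. map (\<lambda>a. pairv a b) [0..<b]) [0..<k])"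

text \<open>Columns g_1, ..., g_n of the generator matrix [I_k tilde G_k] (0-indexed).\<close>
definition gen_cols :: "nat \<Rightarrow> (nat \<Rightarrow> bit) list" where
  "gen_cols k = id_cols k @ Gtilde_cols k"

definition code_len :: "nat \<Rightarrow> nat" where
  "code_len k = length (gen_cols k)"

definition g :: "nat \<Rightarrow> nat \<Rightarrow> nat \<Rightarrow> bit" where
  "g k i = gen_cols k ! i"

definition related :: "nat \<Rightarrow> nat \<Rightarrow> nat set \<Rightarrow> bool" where
  "related k i J \<longleftrightarrow> i < code_len k \<and> J \<subseteq> {..<code_len k} \<and> J \<noteq> {} \<and> i \<notin> J \<and>
     g k i = (\<lambda>t. \<Sum>j\<in>J. g k j t)"

definition live :: "nat \<Rightarrow> nat set \<Rightarrow> nat set" where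
  "live k E = {..<code_len k} - E"

definition easy_repair :: "nat \<Rightarrow> nat set \<Rightarrow> nat \<Rightarrow> bool" where
  "easy_repair k E i \<longleftrightarrow> (\<exists>J. related k i J \<and> card J \<le> 2 \<and> J \<subseteq> live k E)"

definition parallel_easy_repair :: "nat \<Rightarrow> nat set \<Rightarrow> bool" where
  "parallel_easy_repair k E \<longleftrightarrow> (\<forall>i\<in>E. easy_repair k E i)"

end

theory Submission
  imports Defs
begin

lemma unitv_eq[simp]: "unitv a = unitv c \<longleftrightarrow> a = c"
  by (metis unitv_def one_neq_zero)

lemma pairv_unitv[simp]: "a \<noteq> b \<Longrightarrow> pairv a b \<noteq> unitv c"
  "a \<noteq> b \<Longrightarrow> unitv c \<noteq> pairv a b"
  by (metis pairv_def unitv_def one_neq_zero)+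

lemma pairv_eq[simp]: "a \<noteq> b \<Longrightarrow> c \<noteq> d \<Longrightarrow> pairv a b = pairv c d \<longleftrightarrow> (a = c \<and> b = d \<or> a = d \<and> b = c)"
  unfolding pairv_def fun_eq_iff by (metis one_neq_zero)

lemma pairv_comm: "pairv a b = pairv b a"
  unfolding pairv_def by auto

lemma set_gen: "set (gen_cols k) = {unitv a | a. a < k} \<union> {pairv a b | a b. a < b \<and> b < k}"
  unfolding gen_cols_def id_cols_def Gtilde_cols_def by auto

lemma unit_in: "a < k \<Longrightarrow> unitv a \<in> set (gen_cols k)"
  by (auto simp: set_gen)

lemma pair_in: "a \<noteq> b \<Longrightarrow> a < k \<Longrightarrow> b < k \<Longrightarrow> pairv a b \<in> set (gen_cols k)"
  apply (cases "a < b")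
   apply (auto simp: set_gen)
  by (metis linorder_neqE_nat pairv_comm)

lemma pig:
  assumes "finite C" "finite F" "\<forall>c\<in>C. \<exists>x\<in>F. x \<in> S c"
    "\<forall>c\<in>C. \<forall>d\<in>C. c \<noteq> d \<longrightarrow> S c \<inter> S d = {}"
  shows "card C \<le> card F"
proof -
  define h where "h c = (SOME x. x \<in> F \<and> x \<in> S c)" for c
  have h: "c \<in> C \<Longrightarrow> h c \<in> F \<and> h c \<in> S c" for c
    unfolding h_def by (rule someI_ex) (use assms(3) in blast)
  have "inj_on h C"
  proof (rule inj_onI)
    fix c d assume cd: "c \<in> C" "d \<in> C" "h c = h d"
    show "c = d"
    proof (rule ccontr)
      assume "c \<noteq> d"
      hence "S c \<inter> S d = {}" using assms(4) cd by blast
      moreover have "h c \<in> S c" using h[OF cd(1)] by blast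
      moreover have "h c \<in> S d" using h[OF cd(2)] cd(3) by simp
      ultimately show False by blast
    qed
  qed
  moreover have "h ` C \<subseteq> F" using h by blast
  ultimately show ?thesis using card_inj_on_le assms(2) by blast
qed

lemma bit_add: "(1::bit) + 1 = 0" "(0::bit) + 1 = 1" "(1::bit) + 0 = 1" "(0::bit) + 0 = 0"
  by simp_all

lemma vec_lemma:
  assumes k: "k \<ge> 2" and v: "v \<in> set (gen_cols k)" and F: "finite F" "v \<in> F" "card F \<le> k - 1"
  shows "\<exists>u w. u \<in> set (gen_cols k) \<and> w \<in> set (gen_cols k) \<and> u \<notin> F \<and> w \<notin> F \<and> u \<noteq> w
     \<and> (\<forall>t. v t = u t + w t)"
proof -
  have cF: "card (F - {v}) \<le> k - 2" using F by (simp add: card_Diff_singleton)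
  from v consider (U) a where "a < k" "v = unitv a" | (P) a b where "a < b" "b < k" "v = pairv a b"
    by (auto simp: set_gen)
  then show ?thesis
  proof cases
    case U
    define S where "S c = {unitv c, pairv a c}" for c
    have "\<exists>c\<in>{..<k}-{a}. \<forall>x\<in>S c. x \<notin> F - {v}"
    proof (rule ccontr)
      assume "\<not> ?thesis"
      hence "card ({..<k}-{a}) \<le> card (F - {v})"
        by (intro pig[where S=S]) (auto simp: F S_def)
      with cF U k show False by simp
    qed
    then obtain c where c: "c < k" "c \<noteq> a" "unitv c \<notin> F - {v}" "pairv a c \<notin> F - {v}"
      by (auto simp: S_def)
    show ?thesis
      apply (rule exI[of _ "unitv c"], rule exI[of _ "pairv a c"])
      using c U by (auto simp: unit_in pair_in) (auto simp: unitv_def pairv_def split: if_splits)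
  next
    case P
    define S where "S c = (if c = a then {unitv a, unitv b} else {pairv a c, pairv b c})" for c
    have "\<exists>c\<in>{..<k}-{b}. \<forall>x\<in>S c. x \<notin> F - {v}"
    proof (rule ccontr)
      assume "\<not> ?thesis"
      hence h3: "\<forall>c\<in>{..<k}-{b}. \<exists>x\<in>F - {v}. x \<in> S c" by blast
      have h4: "\<forall>c\<in>{..<k}-{b}. \<forall>d\<in>{..<k}-{b}. c \<noteq> d \<longrightarrow> S c \<inter> S d = {}"
        using P by (auto simp: S_def)
      have "card ({..<k}-{b}) \<le> card (F - {v})"
        by (rule pig[OF _ _ h3 h4]) (use F in auto)
      with cF P k show False by simp
    qed
    then obtain c where c: "c < k" "c \<noteq> b" "\<forall>x\<in>S c. x \<notin> F - {v}" by auto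
    show ?thesis
    proof (cases "c = a")
      case True
      show ?thesis
        apply (rule exI[of _ "unitv a"], rule exI[of _ "unitv b"])
        using c P True by (auto simp: S_def unit_in) (auto simp: unitv_def pairv_def split: if_splits)
    next
      case False
      show ?thesis
        apply (rule exI[of _ "pairv a c"], rule exI[of _ "pairv b c"])
        using c P False by (auto simp: S_def pair_in) (auto simp: unitv_def pairv_def split: if_splits)
    qed
  qed
qed

theorem theorem4p2:
  fixes k :: nat and E :: "nat set"
  assumes "k \<ge> 2"
    and "E \<subseteq> {..<code_len k}"
    and "card E \<le> k - 1"
  shows "parallel_easy_repair k E"
  unfolding parallel_easy_repair_def
proof
  fix i assume i: "i \<in> E"
  have fE: "finite E" using assms(2) finite_subset by blast
  have iN: "i < code_len k" using i assms(2) by blast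
  have v: "g k i \<in> set (gen_cols k)" using iN by (simp add: g_def code_len_def)
  have "card (g k ` E) \<le> k - 1" using card_image_le[OF fE, of "g k"] assms(3) by linarith
  then obtain u w where uw: "u \<in> set (gen_cols k)" "w \<in> set (gen_cols k)" "u \<notin> g k ` E" "w \<notin> g k ` E"
    "u \<noteq> w" "\<forall>t. g k i t = u t + w t"
    using vec_lemma[OF assms(1) v, of "g k ` E"] fE i by blast
  obtain ju where ju: "ju < code_len k" "g k ju = u" using uw(1)
    by (metis in_set_conv_nth g_def code_len_def)
  obtain jw where jw: "jw < code_len k" "g k jw = w" using uw(2)
    by (metis in_set_conv_nth g_def code_len_def)
  have ne: "ju \<noteq> jw" using ju jw uw by auto
  have nE: "ju \<notin> E" "jw \<notin> E" using ju jw uw by auto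
  have "i \<noteq> ju" "i \<noteq> jw" using nE i by auto
  show "easy_repair k E i"
    unfolding easy_repair_def
    apply (rule exI[of _ "{ju, jw}"])
    using ne nE ju jw iN uw(6) \<open>i \<noteq> ju\<close> \<open>i \<noteq> jw\<close>
    by (auto simp: related_def live_def)
qed

end
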